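(* Let $N\ge3$ and suppose the settings $X_j,X_j'$ ($j=1,\dots,N$) satisfy (ND) and $\langle I^N_{CHSH}\rangle=\pm2\sqrt2$. Then the Bloch vectors $\vec n_j,\vec n_j'$ for $j=1,\dots,N-1$ fall into one of the following three cases: (i) $\vec n_j=(0,0,\pm1)$ and $\vec n_j'=(\cos\varphi_j',\sin\varphi_j',0)$ for all $j=1,\dots,N-1$; (ii) $\vec n_j=(\cos\varphi_j,\sin\varphi_j,0)$ and $\vec n_j'=(0,0,\pm1)$ for all $j=1,\dots,N-1$; (iii) $\vec n_j=(\cos\varphi_j,\sin\varphi_j,0)$ and $\vec n_j'=(\cos\varphi_j',\sin\varphi_j',0)$ for all $j=1,\dots,N-1$. (The signs $\pm$ may depend on $j$.) If $N$ is odd, only case (iii) can occur.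
   Context: $|G\rangle=\frac{1}{\sqrt2}(|0\cdots0\rangle+|1\cdots1\rangle)$ ($N$ qubits). $\vec\sigma=(\sigma_x,\sigma_y,\sigma_z)$ Pauli matrices. For $j=1,\dots,N$: $X_j=\vec n_j\cdot\vec\sigma$, $X_j'=\vec n_j'\cdot\vec\sigma$ with $\vec n_j=(\sin\alpha_j\cos\varphi_j,\sin\alpha_j\sin\varphi_j,\cos\alpha_j)$, $\vec n_j'=(\sin\alpha_j'\cos\varphi_j',\sin\alpha_j'\sin\varphi_j',\cos\alpha_j')$, $\alpha_j,\alpha_j'\in[0,\pi]$. $\mathbb A_0=\bigotimes_{j=1}^{N-1}X_j$, $\mathbb A_1=\bigotimes_{j=1}^{N-1}X_j'$, $\mathbb B_0=X_N$, $\mathbb B_1=X_N'$, and $\langle I^N_{CHSH}\rangle=\sum_{a,b\in\{0,1\}}(-1)^{ab}\langle G|\mathbb A_a\otimes\mathbb B_b|G\rangle$. (ND): $(\prod_{j=1}^{N-1}\cos\alpha_j)^2+(\prod_{j=1}^{N-1}\sin\alpha_j)^2\neq0$, $(\prod_{j=1}^{N-1}\cos\alpha_j')^2+(\prod_{j=1}^{N-1}\sin\alpha_j')^2\neq0$, and if $N$ is odd, $\sin\alpha_N\neq0$ and $\sin\alpha_N'\neq0$. *)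

theory Defs
  imports Complex_Main
begin

text \<open>Single-qubit operators as 2x2 complex matrices indexed by bool
  (False = basis state 0, True = basis state 1).\<close>

type_synonym qop = "bool \<Rightarrow> bool \<Rightarrow> complex"

definition sigma_x :: qop where
  "sigma_x a b = (if a \<noteq> b then 1 else 0)"

definition sigma_y :: qop where
  "sigma_y a b = (if a = False \<and> b = True then - \<i> else if a = True \<and> b = False then \<i> else 0)"

definition sigma_z :: qop where
  "sigma_z a b = (if a = b then (if a then -1 else 1) else 0)"

definition bloch :: "real \<Rightarrow> real \<Rightarrow> real \<times> real \<times> real" where
  "bloch \<alpha> \<phi> = (sin \<alpha> * cos \<phi>, sin \<alpha> * sin \<phi>, cos \<alpha>)"

definition dot_sigma :: "real \<times> real \<times> real \<Rightarrow> qop" where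
  "dot_sigma n a b = complex_of_real (fst n) * sigma_x a b
                   + complex_of_real (fst (snd n)) * sigma_y a b
                   + complex_of_real (snd (snd n)) * sigma_z a b"

text \<open>Computational basis of N qubits: bit lists of length N; qubit j (1-based)
  is entry j-1.\<close>
definition basis :: "nat \<Rightarrow> bool list set" where
  "basis N = {xs. length xs = N}"

definition tensor :: "nat \<Rightarrow> (nat \<Rightarrow> qop) \<Rightarrow> bool list \<Rightarrow> bool list \<Rightarrow> complex" where
  "tensor N M xs ys = (\<Prod>j\<in>{1..N}. M j (xs ! (j - 1)) (ys ! (j - 1)))"

definition ghz :: "nat \<Rightarrow> bool list \<Rightarrow> complex" where
  "ghz N xs = (if xs = replicate N False \<or> xs = replicate N True
               then complex_of_real (1 / sqrt 2) else 0)"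

definition ghz_expect :: "nat \<Rightarrow> (nat \<Rightarrow> qop) \<Rightarrow> complex" where
  "ghz_expect N M = (\<Sum>xs\<in>basis N. \<Sum>ys\<in>basis N.
                       cnj (ghz N xs) * tensor N M xs ys * ghz N ys)"

text \<open>Operator for A_a \<otimes> B_b: qubits 1..N-1 get X_j (a=0) or X_j' (a=1),
  qubit N gets X_N (b=0) or X_N' (b=1).\<close>
definition setting_op :: "nat \<Rightarrow> (nat \<Rightarrow> qop) \<Rightarrow> (nat \<Rightarrow> qop) \<Rightarrow> nat \<Rightarrow> nat \<Rightarrow> nat \<Rightarrow> qop" where
  "setting_op N X X' a b j =
     (if j < N then (if a = 0 then X j else X' j) else (if b = 0 then X j else X' j))"

definition chsh_N :: "nat \<Rightarrow> (nat \<Rightarrow> qop) \<Rightarrow> (nat \<Rightarrow> qop) \<Rightarrow> complex" where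
  "chsh_N N X X' = (\<Sum>a\<in>{0,1::nat}. \<Sum>b\<in>{0,1::nat}.
      (-1) ^ (a * b) * ghz_expect N (setting_op N X X' a b))"

end

theory Submission imports Defs begin

lemma ds_entries:
  "dot_sigma (bloch a f) False False = complex_of_real (cos a)"
  "dot_sigma (bloch a f) True True = - complex_of_real (cos a)"
  "dot_sigma (bloch a f) False True = complex_of_real (sin a) * cis (- f)"
  "dot_sigma (bloch a f) True False = complex_of_real (sin a) * cis f"
  by (auto simp: dot_sigma_def bloch_def sigma_x_def sigma_y_def sigma_z_def complex_eq_iff)

lemma prod_cis: "finite A \<Longrightarrow> (\<Prod>j\<in>A. cis (f j)) = cis (\<Sum>j\<in>A. f j)"
  by (induct A rule: finite_induct) (auto simp: cis_mult)

lemma finite_basis: "finite (basis N)"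
proof -
  have "basis N = {xs. set xs \<subseteq> UNIV \<and> length xs = N}" by (auto simp: basis_def)
  then show ?thesis using finite_lists_length_eq[of "UNIV::bool set" N] by simp
qed

lemma tensor_rep: "tensor N M (replicate N b) (replicate N c) = (\<Prod>j\<in>{1..N}. M j b c)"
  unfolding tensor_def by (rule prod.cong) auto

lemma ghz_expect_eq:
  assumes "N \<ge> 1"
  shows "ghz_expect N M = ((\<Prod>j\<in>{1..N}. M j False False) + (\<Prod>j\<in>{1..N}. M j False True)
     + (\<Prod>j\<in>{1..N}. M j True False) + (\<Prod>j\<in>{1..N}. M j True True)) / 2" (is "_ = ?R")
proof -
  let ?z = "replicate N False" and ?o = "replicate N True"
  have ne: "?z \<noteq> ?o" using assms by (cases N) auto
  have sub: "{?z, ?o} \<subseteq> basis N" by (auto simp: basis_def)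
  have g: "cnj (complex_of_real (1 / sqrt 2)) * x * complex_of_real (1 / sqrt 2) = x / 2" for x
  proof -
    have "complex_of_real (1 / sqrt 2) * complex_of_real (1 / sqrt 2) = 1/2"
      by (simp flip: of_real_mult)
    then show ?thesis by (simp add: field_simps)
  qed
  have inner: "(\<Sum>ys\<in>basis N. cnj (ghz N xs) * tensor N M xs ys * ghz N ys)
      = (\<Sum>ys\<in>{?z,?o}. cnj (ghz N xs) * tensor N M xs ys * ghz N ys)" for xs
    by (rule sum.mono_neutral_right[OF finite_basis sub]) (auto simp: ghz_def)
  have "ghz_expect N M = (\<Sum>xs\<in>basis N. (\<Sum>ys\<in>{?z,?o}. cnj (ghz N xs) * tensor N M xs ys * ghz N ys))"
    unfolding ghz_expect_def inner ..
  also have "\<dots> = (\<Sum>xs\<in>{?z,?o}. (\<Sum>ys\<in>{?z,?o}. cnj (ghz N xs) * tensor N M xs ys * ghz N ys))"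
    by (rule sum.mono_neutral_right[OF finite_basis sub]) (auto simp: ghz_def)
  also have "\<dots> = ?R"
  proof -
    have "complex_of_real (sqrt 2) * complex_of_real (sqrt 2) = 2"
      by (simp flip: of_real_mult)
    then show ?thesis using ne by (simp add: ghz_def g tensor_rep add_divide_distrib)
  qed
  finally show ?thesis by simp
qed

lemma ghz_bloch:
  assumes "N \<ge> 1"
  shows "ghz_expect N (\<lambda>j. dot_sigma (bloch (A j) (F j))) =
    complex_of_real ((if even N then (\<Prod>j\<in>{1..N}. cos (A j)) else 0)
      + (\<Prod>j\<in>{1..N}. sin (A j)) * cos (\<Sum>j\<in>{1..N}. F j))"
proof -
  have c: "(\<Prod>j\<in>{1..N}. - complex_of_real (cos (A j))) = (-1)^N * complex_of_real (\<Prod>j\<in>{1..N}. cos (A j))"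
    by (simp add: prod_uminus)
  have s1: "(\<Prod>j\<in>{1..N}. complex_of_real (sin (A j)) * cis (- F j)) = complex_of_real (\<Prod>j\<in>{1..N}. sin (A j)) * cis (- (\<Sum>j\<in>{1..N}. F j))"
    by (simp add: prod.distrib prod_cis sum_negf)
  have s2: "(\<Prod>j\<in>{1..N}. complex_of_real (sin (A j)) * cis (F j)) = complex_of_real (\<Prod>j\<in>{1..N}. sin (A j)) * cis ((\<Sum>j\<in>{1..N}. F j))"
    by (simp add: prod.distrib prod_cis)
  have cc: "cis (- x) + cis x = 2 * complex_of_real (cos x)" for x
    by (simp add: complex_eq_iff)
  show ?thesis
    unfolding ghz_expect_eq[OF assms] ds_entries c s1 s2
    by (auto simp: complex_eq_iff simp flip: of_real_prod)
qed

lemma ghz_split: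
  assumes "N \<ge> 1"
  shows "ghz_expect N (\<lambda>j. dot_sigma (bloch (if j < N then A j else b) (if j < N then F j else g))) =
    complex_of_real ((if even N then (\<Prod>j\<in>{1..N-1}. cos (A j)) * cos b else 0)
      + (\<Prod>j\<in>{1..N-1}. sin (A j)) * sin b * cos ((\<Sum>j\<in>{1..N-1}. F j) + g))"
proof -
  have I: "{1..N} = insert N {1..N-1}" "N \<notin> {1..N-1}" using assms by auto
  have p1: "(\<Prod>j\<in>{1..N-1}. cos (if j < N then A j else b)) = (\<Prod>j\<in>{1..N-1}. cos (A j))"
    "(\<Prod>j\<in>{1..N-1}. sin (if j < N then A j else b)) = (\<Prod>j\<in>{1..N-1}. sin (A j))"
    by (rule prod.cong; auto)+
  have s1: "(\<Sum>j\<in>{1..N-1}. (if j < N then F j else g)) = (\<Sum>j\<in>{1..N-1}. F j)"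
    by (rule sum.cong) auto
  show ?thesis
    unfolding ghz_bloch[OF assms] I(1) prod.insert[OF finite_atLeastAtMost I(2)] sum.insert[OF finite_atLeastAtMost I(2)]
    unfolding p1 s1 by (simp add: algebra_simps)
qed

lemma sumz:
  fixes U0 U1 q1 q2 q3 q4 q5 q6 :: real
  assumes "0 = 2*(1 - U0) + 2*(1 - U1) + q1 + q2 + q3 + q4 + q5 + q6"
    "0 \<le> q1" "0 \<le> q2" "0 \<le> q3" "0 \<le> q4" "0 \<le> q5" "0 \<le> q6" "U0 \<le> 1" "U1 \<le> 1"
  shows "U0 = 1 \<and> U1 = 1 \<and> q1 = 0 \<and> q2 = 0 \<and> q3 = 0 \<and> q4 = 0 \<and> q5 = 0 \<and> q6 = 0"
proof -
  have "U0 \<ge> 1" "U1 \<ge> 1" "q1 \<le> 0" "q2 \<le> 0" "q3 \<le> 0" "q4 \<le> 0" "q5 \<le> 0" "q6 \<le> 0"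
    using assms by (smt (verit))+
  then show ?thesis using assms by simp
qed

lemma key:
  fixes x0 y0 z0 x1 y1 z1 a0 b0 c0 a1 b1 c1 R :: real
  assumes v0: "a0\<^sup>2+b0\<^sup>2+c0\<^sup>2=1" and v1: "a1\<^sup>2+b1\<^sup>2+c1\<^sup>2=1"
    and u0: "x0\<^sup>2+y0\<^sup>2+z0\<^sup>2 \<le> 1" and u1: "x1\<^sup>2+y1\<^sup>2+z1\<^sup>2 \<le> 1"
    and R: "R = (x0*(a0+a1)+y0*(b0+b1)+z0*(c0+c1)) + (x1*(a0-a1)+y1*(b0-b1)+z1*(c0-c1))"
    and RR: "R = 2*sqrt 2 \<or> R = -2*sqrt 2"
  shows "x0\<^sup>2+y0\<^sup>2+z0\<^sup>2 = 1 \<and> x1\<^sup>2+y1\<^sup>2+z1\<^sup>2 = 1 \<and> x0*x1+y0*y1+z0*z1 = 0"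
proof -
  define s where "s = sqrt 2"
  have ss: "s * s = 2" unfolding s_def by simp
  have "s * R = 4 \<or> s * R = 4 * (-1)"
    using RR unfolding s_def[symmetric]
  proof
    assume "R = 2 * s" then have "s * R = 2 * (s*s)" by simp
    then show ?thesis using ss by simp
  next
    assume "R = - 2 * s" then have "s * R = - 2 * (s*s)" by simp
    then show ?thesis using ss by simp
  qed
  then obtain t where t: "t = 1 \<or> t = -1" and tR: "s * R = 4 * t" by fastforce
  have tt: "t * t = 1" using t by auto
  have ex: "(s*x - t*w)\<^sup>2 = 2*x\<^sup>2 - 2*(t*(s*x*w)) + w\<^sup>2" for x w
  proof -
    have "(s*x - t*w)\<^sup>2 = (s*s)*x\<^sup>2 - 2*(t*(s*x*w)) + (t*t)*w\<^sup>2"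
      by (simp add: power2_eq_square algebra_simps)
    then show ?thesis using ss tt by simp
  qed
  have tsR: "t*(s*R) = 4" using tR tt by simp
  have Rx: "t*(s*R) = t*(s*x0*(a0+a1)) + t*(s*y0*(b0+b1)) + t*(s*z0*(c0+c1))
     + t*(s*x1*(a0-a1)) + t*(s*y1*(b0-b1)) + t*(s*z1*(c0-c1))"
    unfolding R by (simp add: algebra_simps)
  have ww: "(a0+a1)\<^sup>2 + (b0+b1)\<^sup>2 + (c0+c1)\<^sup>2 + (a0-a1)\<^sup>2 + (b0-b1)\<^sup>2 + (c0-c1)\<^sup>2 = 4"
  proof -
    have "(a0+a1)\<^sup>2 + (b0+b1)\<^sup>2 + (c0+c1)\<^sup>2 + (a0-a1)\<^sup>2 + (b0-b1)\<^sup>2 + (c0-c1)\<^sup>2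
       = 2*(a0\<^sup>2+b0\<^sup>2+c0\<^sup>2) + 2*(a1\<^sup>2+b1\<^sup>2+c1\<^sup>2)"
      by (simp add: power2_eq_square algebra_simps)
    then show ?thesis using v0 v1 by simp
  qed
  have id: "0 = 2*(1 - (x0\<^sup>2+y0\<^sup>2+z0\<^sup>2)) + 2*(1 - (x1\<^sup>2+y1\<^sup>2+z1\<^sup>2))
     + (s*x0 - t*(a0+a1))\<^sup>2 + (s*y0 - t*(b0+b1))\<^sup>2 + (s*z0 - t*(c0+c1))\<^sup>2
     + (s*x1 - t*(a0-a1))\<^sup>2 + (s*y1 - t*(b0-b1))\<^sup>2 + (s*z1 - t*(c0-c1))\<^sup>2"
    unfolding ex using tsR Rx ww by (simp add: algebra_simps)
  have sq: "0 \<le> (s*x0 - t*(a0+a1))\<^sup>2" "0 \<le> (s*y0 - t*(b0+b1))\<^sup>2" "0 \<le> (s*z0 - t*(c0+c1))\<^sup>2"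
     "0 \<le> (s*x1 - t*(a0-a1))\<^sup>2" "0 \<le> (s*y1 - t*(b0-b1))\<^sup>2" "0 \<le> (s*z1 - t*(c0-c1))\<^sup>2" by simp_all
  note Z = sumz[OF id sq u0 u1]
  have U0: "x0\<^sup>2+y0\<^sup>2+z0\<^sup>2 = 1" and U1: "x1\<^sup>2+y1\<^sup>2+z1\<^sup>2 = 1" using Z by auto
  from Z have "(s*x0 - t*(a0+a1))\<^sup>2 = 0" "(s*y0 - t*(b0+b1))\<^sup>2 = 0" "(s*z0 - t*(c0+c1))\<^sup>2 = 0"
     "(s*x1 - t*(a0-a1))\<^sup>2 = 0" "(s*y1 - t*(b0-b1))\<^sup>2 = 0" "(s*z1 - t*(c0-c1))\<^sup>2 = 0"
    by auto
  then have e: "s*x0 = t*(a0+a1)" "s*y0 = t*(b0+b1)" "s*z0 = t*(c0+c1)"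
     "s*x1 = t*(a0-a1)" "s*y1 = t*(b0-b1)" "s*z1 = t*(c0-c1)" by simp_all
  have "(s*x0)*(s*x1)+(s*y0)*(s*y1)+(s*z0)*(s*z1) = (s*s)*(x0*x1+y0*y1+z0*z1)"
    by (simp add: algebra_simps)
  then have "2*(x0*x1+y0*y1+z0*z1) = (s*x0)*(s*x1)+(s*y0)*(s*y1)+(s*z0)*(s*z1)"
    using ss by simp
  also have "\<dots> = (t*t)*((a0\<^sup>2+b0\<^sup>2+c0\<^sup>2) - (a1\<^sup>2+b1\<^sup>2+c1\<^sup>2))"
    unfolding e by (simp add: power2_eq_square algebra_simps)
  also have "\<dots> = 0" using v0 v1 by simp
  finally have "2*(x0*x1+y0*y1+z0*z1) = 0" .
  then show ?thesis using U0 U1 by simp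
qed

lemma prod01:
  fixes f :: "nat \<Rightarrow> real"
  assumes "finite J" "\<And>j. j \<in> J \<Longrightarrow> 0 \<le> f j \<and> f j \<le> 1" "prod f J = 1" "i \<in> J"
  shows "f i = 1"
proof -
  have "prod f J = f i * prod f (J - {i})" using assms by (simp add: prod.remove)
  moreover have "prod f (J - {i}) \<le> 1" by (rule prod_le_1) (use assms(2) in auto)
  moreover have "0 \<le> prod f (J - {i})" by (rule prod_nonneg) (use assms(2) in auto)
  moreover have "0 \<le> f i" "f i \<le> 1" using assms by auto
  ultimately have "1 \<le> f i" using assms(3) mult_left_le[of "prod f (J - {i})" "f i"] by linarith
  then show ?thesis using \<open>f i \<le> 1\<close> by simp
qed

lemma CS_le:
  fixes a :: "nat \<Rightarrow> real"
  assumes "finite J" "J \<noteq> {}"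
  shows "(\<Prod>j\<in>J. cos (a j))\<^sup>2 + (\<Prod>j\<in>J. sin (a j))\<^sup>2 \<le> 1"
  using assms
proof (induct J rule: finite_ne_induct)
  case (singleton x) then show ?case by simp
next
  case (insert i J)
  define P where "P = (\<Prod>j\<in>J. cos (a j))\<^sup>2"
  define Q where "Q = (\<Prod>j\<in>J. sin (a j))\<^sup>2"
  have PQ: "P + Q \<le> 1" "0 \<le> P" "0 \<le> Q" using insert P_def Q_def by auto
  have "(cos (a i))\<^sup>2 * P \<le> (cos (a i))\<^sup>2" "(sin (a i))\<^sup>2 * Q \<le> (sin (a i))\<^sup>2"
    using PQ by (simp_all add: mult_left_le)
  moreover have "(\<Prod>j\<in>insert i J. cos (a j))\<^sup>2 + (\<Prod>j\<in>insert i J. sin (a j))\<^sup>2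
      = (cos (a i))\<^sup>2 * P + (sin (a i))\<^sup>2 * Q"
    using insert by (simp add: P_def Q_def power_mult_distrib)
  moreover have "(cos (a i))\<^sup>2 + (sin (a i))\<^sup>2 = 1" by simp
  ultimately show ?case by linarith
qed

lemma CS_eq:
  fixes a :: "nat \<Rightarrow> real"
  assumes "finite J" "card J \<ge> 2"
    and eq: "(\<Prod>j\<in>J. cos (a j))\<^sup>2 + (\<Prod>j\<in>J. sin (a j))\<^sup>2 = 1"
  shows "(\<forall>j\<in>J. cos (a j) = 0) \<or> (\<forall>j\<in>J. sin (a j) = 0)"
proof -
  obtain i where i: "i \<in> J" using assms by fastforce
  define J' where "J' = J - {i}"
  have fJ': "finite J'" using assms J'_def by simp
  have "card J' = card J - 1" using assms(1) i by (simp add: J'_def card_Diff_singleton)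
  then have neJ': "J' \<noteq> {}" using assms(2) by auto
  have JJ: "J = insert i J'" "i \<notin> J'" using i J'_def by auto
  define P where "P = (\<Prod>j\<in>J'. (cos (a j))\<^sup>2)"
  define Q where "Q = (\<Prod>j\<in>J'. (sin (a j))\<^sup>2)"
  have PQ: "P + Q \<le> 1" using CS_le[OF fJ' neJ', of a] by (simp add: P_def Q_def prod_power_distrib)
  have P0: "0 \<le> P" "0 \<le> Q" by (simp_all add: P_def Q_def prod_nonneg)
  have e2: "(cos (a i))\<^sup>2 * P + (sin (a i))\<^sup>2 * Q = 1"
    using eq unfolding JJ(1) using fJ' JJ(2) by (simp add: P_def Q_def power_mult_distrib prod_power_distrib)
  have cs: "(cos (a i))\<^sup>2 + (sin (a i))\<^sup>2 = 1" by simp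
  have t1: "0 \<le> (cos (a i))\<^sup>2 * (1 - P)" "0 \<le> (sin (a i))\<^sup>2 * (1 - Q)" using PQ P0 by simp_all
  have "(cos (a i))\<^sup>2 * (1 - P) + (sin (a i))\<^sup>2 * (1 - Q) = 0"
    using e2 cs by (simp add: algebra_simps)
  then have z: "(cos (a i))\<^sup>2 * (1 - P) = 0" "(sin (a i))\<^sup>2 * (1 - Q) = 0" using t1 by linarith+
  have bnd: "\<And>j. 0 \<le> (cos (a j))\<^sup>2 \<and> (cos (a j))\<^sup>2 \<le> 1" "\<And>j. 0 \<le> (sin (a j))\<^sup>2 \<and> (sin (a j))\<^sup>2 \<le> 1"
    by (simp_all add: abs_square_le_1)
  show ?thesis
  proof (cases "cos (a i) = 0")
    case True
    then have "(sin (a i))\<^sup>2 = 1" using cs by simp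
    then have "Q = 1" using z by simp
    then have "\<forall>j\<in>J'. (sin (a j))\<^sup>2 = 1"
      using prod01[OF fJ', of "\<lambda>j. (sin (a j))\<^sup>2"] bnd(2) unfolding Q_def by blast
    then have "\<forall>j\<in>J'. cos (a j) = 0"
    proof (intro ballI)
      fix j assume "j \<in> J'" "\<forall>j\<in>J'. (sin (a j))\<^sup>2 = 1"
      then have "(sin (a j))\<^sup>2 = 1" by blast
      moreover have "(cos (a j))\<^sup>2 + (sin (a j))\<^sup>2 = 1" by simp
      ultimately have "(cos (a j))\<^sup>2 = 0" by linarith
      then show "cos (a j) = 0" by simp
    qed
    then show ?thesis using True JJ by auto
  next
    case False
    then have "P = 1" using z by simp
    then have "Q = 0" using PQ P0 by simp
    then have si: "sin (a i) = 0" using z by simp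
    have "\<forall>j\<in>J'. (cos (a j))\<^sup>2 = 1"
      using prod01[OF fJ', of "\<lambda>j. (cos (a j))\<^sup>2"] bnd(1) \<open>P = 1\<close> unfolding P_def by blast
    then have "\<forall>j\<in>J'. sin (a j) = 0"
    proof (intro ballI)
      fix j assume "j \<in> J'" "\<forall>j\<in>J'. (cos (a j))\<^sup>2 = 1"
      then have "(cos (a j))\<^sup>2 = 1" by blast
      moreover have "(cos (a j))\<^sup>2 + (sin (a j))\<^sup>2 = 1" by simp
      ultimately have "(sin (a j))\<^sup>2 = 0" by linarith
      then show "sin (a j) = 0" by simp
    qed
    then show ?thesis using si JJ by auto
  qed
qed

lemma ghz_cong:
  assumes "N \<ge> 1" "\<And>j. j \<in> {1..N} \<Longrightarrow> M j = M' j"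
  shows "ghz_expect N M = ghz_expect N M'"
proof -
  have "(\<Prod>j\<in>{1..N}. M j b c) = (\<Prod>j\<in>{1..N}. M' j b c)" for b c
    by (rule prod.cong) (auto simp: assms(2))
  then show ?thesis unfolding ghz_expect_eq[OF assms(1)] by simp
qed

lemma E_gen:
  assumes "N \<ge> 1"
  shows "ghz_expect N (setting_op N (\<lambda>j. dot_sigma (bloch (\<alpha> j) (\<phi> j))) (\<lambda>j. dot_sigma (bloch (\<alpha>' j) (\<phi>' j))) a b)
    = complex_of_real ((if even N then (\<Prod>j\<in>{1..N-1}. cos (if a = 0 then \<alpha> j else \<alpha>' j)) * cos (if b = 0 then \<alpha> N else \<alpha>' N) else 0)
      + (\<Prod>j\<in>{1..N-1}. sin (if a = 0 then \<alpha> j else \<alpha>' j)) * sin (if b = 0 then \<alpha> N else \<alpha>' N)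
        * cos ((\<Sum>j\<in>{1..N-1}. (if a = 0 then \<phi> j else \<phi>' j)) + (if b = 0 then \<phi> N else \<phi>' N)))"
  (is "_ = ?R")
proof -
  have "ghz_expect N (setting_op N (\<lambda>j. dot_sigma (bloch (\<alpha> j) (\<phi> j))) (\<lambda>j. dot_sigma (bloch (\<alpha>' j) (\<phi>' j))) a b)
     = ghz_expect N (\<lambda>j. dot_sigma (bloch (if j < N then (if a = 0 then \<alpha> j else \<alpha>' j) else (if b = 0 then \<alpha> N else \<alpha>' N))
                                          (if j < N then (if a = 0 then \<phi> j else \<phi>' j) else (if b = 0 then \<phi> N else \<phi>' N))))"
    by (rule ghz_cong[OF assms]) (auto simp: setting_op_def)
  also have "\<dots> = ?R" by (rule ghz_split[OF assms])
  finally show ?thesis .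
qed

lemma eq_conv:
  assumes "0 \<le> a" "a \<le> pi" "cos a = 0"
  shows "bloch a f = (cos f, sin f, 0)"
proof -
  have "sin a \<ge> 0" using assms by (simp add: sin_ge_zero)
  moreover have "(sin a)\<^sup>2 = 1" using assms(3) sin_cos_squared_add[of a] by simp
  ultimately have "sin a = 1" by (simp add: power2_eq_1_iff)
  then show ?thesis using assms by (simp add: bloch_def)
qed

lemma z_conv:
  assumes "sin a = 0"
  shows "bloch a f = (0, 0, 1) \<or> bloch a f = (0, 0, -1)"
proof -
  have "(cos a)\<^sup>2 = 1" using assms sin_cos_squared_add[of a] by simp
  then have "cos a = 1 \<or> cos a = -1" by (simp add: power2_eq_1_iff)
  then show ?thesis using assms by (auto simp: bloch_def)
qed

lemma vnorm: "(cos a)\<^sup>2 + (sin a * cos f)\<^sup>2 + (sin a * sin f)\<^sup>2 = 1" for a f :: real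
proof -
  have "(sin a * cos f)\<^sup>2 + (sin a * sin f)\<^sup>2 = (sin a)\<^sup>2 * ((cos f)\<^sup>2 + (sin f)\<^sup>2)"
    by algebra
  then have "(sin a * cos f)\<^sup>2 + (sin a * sin f)\<^sup>2 = (sin a)\<^sup>2" by simp
  then show ?thesis using sin_cos_squared_add[of a] by linarith
qed

lemma unorm: "p\<^sup>2 + (S * cos f)\<^sup>2 + (- S * sin f)\<^sup>2 = p\<^sup>2 + S\<^sup>2" for p S f :: real
proof -
  have "(S * cos f)\<^sup>2 + (- S * sin f)\<^sup>2 = S\<^sup>2 * ((cos f)\<^sup>2 + (sin f)\<^sup>2)"
    by algebra
  then show ?thesis by simp
qed

lemma Eform0: "(if ev then C * cb else 0) + S * sb * (cP * cf - sP * sf)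
   = (if ev then C else 0) * cb + (S * cP) * (sb * cf) + (- S * sP) * (sb * sf)"
  for C cb S sb cP cf sP sf :: real
  by (cases ev) (simp_all add: algebra_simps)

lemma Eform: "(if ev then C * cos b else 0) + S * sin b * cos (P + f)
   = (if ev then C else 0) * cos b + (S * cos P) * (sin b * cos f) + (- S * sin P) * (sin b * sin f)"
  for C S P b f :: real
  by (simp only: cos_add Eform0)

theorem theorem2:
  fixes N :: nat and \<alpha> \<phi> \<alpha>' \<phi>' :: "nat \<Rightarrow> real"
  assumes N3: "N \<ge> 3"
    and ang: "\<forall>j\<in>{1..N}. 0 \<le> \<alpha> j \<and> \<alpha> j \<le> pi \<and> 0 \<le> \<alpha>' j \<and> \<alpha>' j \<le> pi"
    and ND1: "(\<Prod>j\<in>{1..N-1}. cos (\<alpha> j))\<^sup>2 + (\<Prod>j\<in>{1..N-1}. sin (\<alpha> j))\<^sup>2 \<noteq> 0"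
    and ND2: "(\<Prod>j\<in>{1..N-1}. cos (\<alpha>' j))\<^sup>2 + (\<Prod>j\<in>{1..N-1}. sin (\<alpha>' j))\<^sup>2 \<noteq> 0"
    and ND3: "odd N \<longrightarrow> sin (\<alpha> N) \<noteq> 0 \<and> sin (\<alpha>' N) \<noteq> 0"
    and val: "chsh_N N (\<lambda>j. dot_sigma (bloch (\<alpha> j) (\<phi> j))) (\<lambda>j. dot_sigma (bloch (\<alpha>' j) (\<phi>' j)))
                = complex_of_real (2 * sqrt 2)
           \<or> chsh_N N (\<lambda>j. dot_sigma (bloch (\<alpha> j) (\<phi> j))) (\<lambda>j. dot_sigma (bloch (\<alpha>' j) (\<phi>' j)))
                = complex_of_real (- 2 * sqrt 2)"
  shows "((\<forall>j\<in>{1..N-1}. (bloch (\<alpha> j) (\<phi> j) = (0, 0, 1) \<or> bloch (\<alpha> j) (\<phi> j) = (0, 0, -1))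
                         \<and> bloch (\<alpha>' j) (\<phi>' j) = (cos (\<phi>' j), sin (\<phi>' j), 0))
        \<or> (\<forall>j\<in>{1..N-1}. bloch (\<alpha> j) (\<phi> j) = (cos (\<phi> j), sin (\<phi> j), 0)
                         \<and> (bloch (\<alpha>' j) (\<phi>' j) = (0, 0, 1) \<or> bloch (\<alpha>' j) (\<phi>' j) = (0, 0, -1)))
        \<or> (\<forall>j\<in>{1..N-1}. bloch (\<alpha> j) (\<phi> j) = (cos (\<phi> j), sin (\<phi> j), 0)
                         \<and> bloch (\<alpha>' j) (\<phi>' j) = (cos (\<phi>' j), sin (\<phi>' j), 0)))
       \<and> (odd N \<longrightarrow>
           (\<forall>j\<in>{1..N-1}. bloch (\<alpha> j) (\<phi> j) = (cos (\<phi> j), sin (\<phi> j), 0)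
                         \<and> bloch (\<alpha>' j) (\<phi>' j) = (cos (\<phi>' j), sin (\<phi>' j), 0)))"
proof -
  have N1: "N \<ge> 1" using N3 by simp
  define J where "J = {1..N-1}"
  have fJ: "finite J" and cJ: "card J \<ge> 2" and neJ: "J \<noteq> {}" and oneJ: "1 \<in> J"
    using N3 by (auto simp: J_def)
  define C0 where "C0 = (\<Prod>j\<in>J. cos (\<alpha> j))"
  define S0 where "S0 = (\<Prod>j\<in>J. sin (\<alpha> j))"
  define P0 where "P0 = (\<Sum>j\<in>J. \<phi> j)"
  define C1 where "C1 = (\<Prod>j\<in>J. cos (\<alpha>' j))"
  define S1 where "S1 = (\<Prod>j\<in>J. sin (\<alpha>' j))"
  define P1 where "P1 = (\<Sum>j\<in>J. \<phi>' j)"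
  define p0 where "p0 = (if even N then C0 else 0)"
  define p1 where "p1 = (if even N then C1 else 0)"
  let ?X = "\<lambda>j. dot_sigma (bloch (\<alpha> j) (\<phi> j))" and ?X' = "\<lambda>j. dot_sigma (bloch (\<alpha>' j) (\<phi>' j))"
  define E :: "bool \<Rightarrow> real \<Rightarrow> real \<Rightarrow> real \<Rightarrow> real \<Rightarrow> real \<Rightarrow> real" where "E ev C S P b f = (if ev then C * cos b else 0) + S * sin b * cos (P + f)" for ev C S P b f
  define R where "R = E (even N) C0 S0 P0 (\<alpha> N) (\<phi> N) + E (even N) C0 S0 P0 (\<alpha>' N) (\<phi>' N)
     + E (even N) C1 S1 P1 (\<alpha> N) (\<phi> N) - E (even N) C1 S1 P1 (\<alpha>' N) (\<phi>' N)"
  have chsh: "chsh_N N ?X ?X' = complex_of_real R"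
    unfolding chsh_N_def R_def E_def C0_def S0_def P0_def C1_def S1_def P1_def J_def
    by (simp add: E_gen[OF N1])
  have RR: "R = 2 * sqrt 2 \<or> R = - 2 * sqrt 2"
    using val unfolding chsh of_real_eq_iff .
  have Rf: "R = (p0*(cos (\<alpha> N) + cos (\<alpha>' N)) + (S0 * cos P0)*(sin (\<alpha> N) * cos (\<phi> N) + sin (\<alpha>' N) * cos (\<phi>' N))
       + (- S0 * sin P0)*(sin (\<alpha> N) * sin (\<phi> N) + sin (\<alpha>' N) * sin (\<phi>' N)))
     + (p1*(cos (\<alpha> N) - cos (\<alpha>' N)) + (S1 * cos P1)*(sin (\<alpha> N) * cos (\<phi> N) - sin (\<alpha>' N) * cos (\<phi>' N))
       + (- S1 * sin P1)*(sin (\<alpha> N) * sin (\<phi> N) - sin (\<alpha>' N) * sin (\<phi>' N)))"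
    unfolding R_def E_def Eform p0_def[symmetric] p1_def[symmetric] by (simp add: algebra_simps)
  have CS0: "C0\<^sup>2 + S0\<^sup>2 \<le> 1" unfolding C0_def S0_def by (rule CS_le[OF fJ neJ])
  have CS1: "C1\<^sup>2 + S1\<^sup>2 \<le> 1" unfolding C1_def S1_def by (rule CS_le[OF fJ neJ])
  have pC0: "p0\<^sup>2 \<le> C0\<^sup>2" and pC1: "p1\<^sup>2 \<le> C1\<^sup>2" by (auto simp: p0_def p1_def)
  have u0: "p0\<^sup>2 + (S0 * cos P0)\<^sup>2 + (- S0 * sin P0)\<^sup>2 \<le> 1" unfolding unorm using CS0 pC0 by linarith
  have u1: "p1\<^sup>2 + (S1 * cos P1)\<^sup>2 + (- S1 * sin P1)\<^sup>2 \<le> 1" unfolding unorm using CS1 pC1 by linarith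
  note K = key[OF vnorm vnorm u0 u1 Rf RR]
  have U0: "p0\<^sup>2 + S0\<^sup>2 = 1" and U1: "p1\<^sup>2 + S1\<^sup>2 = 1" using K unfolding unorm by auto
  have dot: "p0 * p1 + (S0 * cos P0) * (S1 * cos P1) + (- S0 * sin P0) * (- S1 * sin P1) = 0" using K by auto
  have D0: "(\<forall>j\<in>J. cos (\<alpha> j) = 0) \<or> (\<forall>j\<in>J. sin (\<alpha> j) = 0)"
    by (rule CS_eq[OF fJ cJ]) (use CS0 pC0 U0 in \<open>simp add: C0_def S0_def\<close>)
  have D1: "(\<forall>j\<in>J. cos (\<alpha>' j) = 0) \<or> (\<forall>j\<in>J. sin (\<alpha>' j) = 0)"
    by (rule CS_eq[OF fJ cJ]) (use CS1 pC1 U1 in \<open>simp add: C1_def S1_def\<close>)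
  have Z0: "S0 = 0" if "\<forall>j\<in>J. sin (\<alpha> j) = 0" proof -
    have "\<exists>j\<in>J. sin (\<alpha> j) = 0" using that oneJ by blast
    then show ?thesis by (simp add: S0_def fJ)
  qed
  have Z1: "S1 = 0" if "\<forall>j\<in>J. sin (\<alpha>' j) = 0" proof -
    have "\<exists>j\<in>J. sin (\<alpha>' j) = 0" using that oneJ by blast
    then show ?thesis by (simp add: S1_def fJ)
  qed
  have notboth: "\<not> ((\<forall>j\<in>J. sin (\<alpha> j) = 0) \<and> (\<forall>j\<in>J. sin (\<alpha>' j) = 0))"
  proof
    assume a: "(\<forall>j\<in>J. sin (\<alpha> j) = 0) \<and> (\<forall>j\<in>J. sin (\<alpha>' j) = 0)"
    then have "S0 = 0" "S1 = 0" using Z0 Z1 by auto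
    then have "p0 * p1 = 0" "p0\<^sup>2 = 1" "p1\<^sup>2 = 1" using dot U0 U1 by auto
    then show False by (auto simp: power2_eq_square)
  qed
  have oddc: "(\<forall>j\<in>J. cos (\<alpha> j) = 0) \<and> (\<forall>j\<in>J. cos (\<alpha>' j) = 0)" if "odd N"
  proof -
    have "S0\<^sup>2 = 1" "S1\<^sup>2 = 1" using U0 U1 that by (auto simp: p0_def p1_def)
    then have "S0 \<noteq> 0" "S1 \<noteq> 0" by auto
    then show ?thesis using D0 D1 Z0 Z1 by blast
  qed
  have angJ: "\<And>j. j \<in> J \<Longrightarrow> 0 \<le> \<alpha> j \<and> \<alpha> j \<le> pi \<and> 0 \<le> \<alpha>' j \<and> \<alpha>' j \<le> pi"
    using ang by (auto simp: J_def)
  have EQ0: "\<forall>j\<in>J. bloch (\<alpha> j) (\<phi> j) = (cos (\<phi> j), sin (\<phi> j), 0)" if "\<forall>j\<in>J. cos (\<alpha> j) = 0"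
    using that angJ eq_conv by blast
  have EQ1: "\<forall>j\<in>J. bloch (\<alpha>' j) (\<phi>' j) = (cos (\<phi>' j), sin (\<phi>' j), 0)" if "\<forall>j\<in>J. cos (\<alpha>' j) = 0"
    using that angJ eq_conv by blast
  have ZZ0: "\<forall>j\<in>J. bloch (\<alpha> j) (\<phi> j) = (0, 0, 1) \<or> bloch (\<alpha> j) (\<phi> j) = (0, 0, -1)" if "\<forall>j\<in>J. sin (\<alpha> j) = 0"
    using that z_conv by blast
  have ZZ1: "\<forall>j\<in>J. bloch (\<alpha>' j) (\<phi>' j) = (0, 0, 1) \<or> bloch (\<alpha>' j) (\<phi>' j) = (0, 0, -1)" if "\<forall>j\<in>J. sin (\<alpha>' j) = 0"
    using that z_conv by blast
  have part1: "(\<forall>j\<in>J. (bloch (\<alpha> j) (\<phi> j) = (0, 0, 1) \<or> bloch (\<alpha> j) (\<phi> j) = (0, 0, -1))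
                         \<and> bloch (\<alpha>' j) (\<phi>' j) = (cos (\<phi>' j), sin (\<phi>' j), 0))
        \<or> (\<forall>j\<in>J. bloch (\<alpha> j) (\<phi> j) = (cos (\<phi> j), sin (\<phi> j), 0)
                         \<and> (bloch (\<alpha>' j) (\<phi>' j) = (0, 0, 1) \<or> bloch (\<alpha>' j) (\<phi>' j) = (0, 0, -1)))
        \<or> (\<forall>j\<in>J. bloch (\<alpha> j) (\<phi> j) = (cos (\<phi> j), sin (\<phi> j), 0)
                         \<and> bloch (\<alpha>' j) (\<phi>' j) = (cos (\<phi>' j), sin (\<phi>' j), 0))"
    using D0 D1 notboth EQ0 EQ1 ZZ0 ZZ1 by blast
  have part2: "odd N \<longrightarrow> (\<forall>j\<in>J. bloch (\<alpha> j) (\<phi> j) = (cos (\<phi> j), sin (\<phi> j), 0)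
                         \<and> bloch (\<alpha>' j) (\<phi>' j) = (cos (\<phi>' j), sin (\<phi>' j), 0))"
    using oddc EQ0 EQ1 by blast
  show ?thesis using part1 part2 unfolding J_def by blast
qed

end
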